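(* Let $p$ be an odd prime, $\alpha_r=\frac{(1/2)_r}{r!}$ for $r\ge0$ (where $(x)_r=x(x+1)\cdots(x+r-1)$), and $\gamma=(4^{p-1}-1)/p$. Let $r,r',t$ be integers $\ge0$ with $r=pr'+t$ and $t<p$. If $t>p/2$, then $p$ divides $\alpha_r$. If $t<p/2$, then $$\alpha_r\equiv\alpha_{r'}\alpha_t\left(1-\gamma p r'+2pr'\sum_{j=1}^{2t}\frac{(-1)^{j-1}}{j}\right)\pmod{p^2}.$$
   Context: Divisibility and congruences are in the ring $\mathbb{Z}_{(p)}$ of $p$-integral rationals. *)

theory Defs
  imports Complex_Main "HOL-Computational_Algebra.Primes"
begin

definition alpha :: "nat \<Rightarrow> rat" where
  "alpha r = pochhammer (1/2) r / fact r"

text \<open>A rational x is p-integral (lies in Z_(p)) iff its reduced denominator is not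
divisible by p.\<close>
definition p_integral :: "nat \<Rightarrow> rat \<Rightarrow> bool" where
  "p_integral p x \<longleftrightarrow> \<not> (int p dvd snd (quotient_of x))"

definition pdvd :: "nat \<Rightarrow> rat \<Rightarrow> rat \<Rightarrow> bool" where
  "pdvd p a b \<longleftrightarrow> (\<exists>c. p_integral p c \<and> b = a * c)"

definition pcong :: "nat \<Rightarrow> rat \<Rightarrow> rat \<Rightarrow> rat \<Rightarrow> bool" where
  "pcong p a b m \<longleftrightarrow> p_integral p a \<and> p_integral p b \<and> pdvd p m (a - b)"

end

theory Submission
  imports Defs "HOL-Number_Theory.Number_Theory"
begin

lemma pint_iff:
  assumes "prime p"
  shows "p_integral p x \<longleftrightarrow> (\<exists>a b. \<not> int p dvd b \<and> x = of_int a / of_int b)"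
proof
  assume "p_integral p x"
  then show "\<exists>a b. \<not> int p dvd b \<and> x = of_int a / of_int b"
    unfolding p_integral_def by (metis prod.collapse quotient_of_div)
next
  assume "\<exists>a b. \<not> int p dvd b \<and> x = of_int a / of_int b"
  then obtain a b where ab: "\<not> int p dvd b" "x = of_int a / of_int b" by blast
  obtain a' b' where q: "quotient_of x = (a', b')" by (cases "quotient_of x")
  have b0: "b \<noteq> 0" using ab by auto
  have b'0: "b' > 0" using q quotient_of_denom_pos by blast
  have cop: "coprime a' b'" using q quotient_of_coprime by blast
  have "x = of_int a' / of_int b'" using q quotient_of_div by blast
  then have "of_int a' / of_int b' = (of_int a / of_int b :: rat)" using ab by simp
  then have "of_int (a' * b) = (of_int (a * b') :: rat)" using b0 b'0
    by (simp add: field_simps)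
  then have e: "a' * b = a * b'" by (simp only: of_int_eq_iff)
  then have "b' dvd a' * b" by simp
  then have "b' dvd b" using cop by (metis coprime_commute coprime_dvd_mult_right_iff)
  then have "\<not> int p dvd b'" using ab dvd_trans by blast
  then show "p_integral p x" unfolding p_integral_def q by simp
qed

context fixes p :: nat assumes pp: "prime p" begin

abbreviation "pint \<equiv> p_integral p"

lemma pint_frac: "\<not> int p dvd b \<Longrightarrow> pint (of_int a / of_int b)"
  using pint_iff[OF pp] by blast

lemma pint_int[simp]: "pint (of_int a)"
proof -
  have "\<not> int p dvd 1" using pp by auto
  from pint_frac[OF this, of a] show ?thesis by simp
qed

lemma pint_nat[simp]: "pint (of_nat n)"
  using pint_int[of "int n"] by simp

lemma pint_0[simp]: "pint 0" and pint_1[simp]: "pint 1"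
  using pint_int[of 0] pint_int[of 1] by simp_all

lemma pint_numeral[simp]: "pint (numeral n)"
  using pint_nat[of "numeral n"] by simp

lemma pint_dvd_prod: "\<not> int p dvd b \<Longrightarrow> \<not> int p dvd d \<Longrightarrow> \<not> int p dvd (b * d)"
  using pp by (metis prime_dvd_mult_iff prime_nat_int_transfer)

lemma pint_add[intro]: "pint x \<Longrightarrow> pint y \<Longrightarrow> pint (x + y)"
proof -
  assume "pint x" "pint y"
  then obtain a b c d where "\<not> int p dvd b" "x = of_int a / of_int b"
     "\<not> int p dvd d" "y = of_int c / of_int d" using pint_iff[OF pp] by metis
  moreover then have "b \<noteq> 0" "d \<noteq> 0" by auto
  ultimately have E: "x + y = of_int (a*d + c*b) / of_int (b*d)" and N: "\<not> int p dvd (b*d)"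
    using pint_dvd_prod by (auto simp: field_simps)
  show ?thesis unfolding E by (rule pint_frac[OF N])
qed

lemma pint_mult[intro]: "pint x \<Longrightarrow> pint y \<Longrightarrow> pint (x * y)"
proof -
  assume "pint x" "pint y"
  then obtain a b c d where "\<not> int p dvd b" "x = of_int a / of_int b"
     "\<not> int p dvd d" "y = of_int c / of_int d" using pint_iff[OF pp] by metis
  moreover then have "b \<noteq> 0" "d \<noteq> 0" by auto
  ultimately have E: "x * y = of_int (a*c) / of_int (b*d)" and N: "\<not> int p dvd (b*d)"
    using pint_dvd_prod by (auto simp: field_simps)
  show ?thesis unfolding E by (rule pint_frac[OF N])
qed

lemma pint_uminus[intro]: "pint x \<Longrightarrow> pint (- x)"
  using pint_mult[of "-1" x] pint_int[of "-1"] by simp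

lemma pint_diff[intro]: "pint x \<Longrightarrow> pint y \<Longrightarrow> pint (x - y)"
  using pint_add[of x "-y"] pint_uminus by simp

lemma pint_sum[intro]: "(\<And>i. i \<in> A \<Longrightarrow> pint (f i)) \<Longrightarrow> pint (sum f A)"
  by (induct A rule: infinite_finite_induct) auto

lemma pint_prod[intro]: "(\<And>i. i \<in> A \<Longrightarrow> pint (f i)) \<Longrightarrow> pint (prod f A)"
  by (induct A rule: infinite_finite_induct) auto

lemma pint_power[intro]: "pint x \<Longrightarrow> pint (x ^ n)"
  by (induct n) auto

definition cg :: "rat \<Rightarrow> rat \<Rightarrow> bool" where
  "cg x y \<longleftrightarrow> pdvd p ((of_nat p)^2) (x - y)"

lemma cgI: "pint e \<Longrightarrow> x = y + (of_nat p)^2 * e \<Longrightarrow> cg x y"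
  unfolding cg_def pdvd_def by auto

lemma cgE: "cg x y \<Longrightarrow> (\<And>e. pint e \<Longrightarrow> x = y + (of_nat p)^2 * e \<Longrightarrow> P) \<Longrightarrow> P"
  unfolding cg_def pdvd_def by (metis add.commute diff_add_cancel)

lemma cg_refl[simp]: "cg x x"
  by (rule cgI[of 0]) auto

lemma cg_sym: "cg x y \<Longrightarrow> cg y x"
  by (erule cgE, rule cgI[of "- _"]) auto

lemma cg_trans: "cg x y \<Longrightarrow> cg y z \<Longrightarrow> cg x z"
  apply (erule cgE, erule cgE)
  subgoal for e e' by (rule cgI[of "e + e'"]) (auto simp: algebra_simps)
  done

lemma cg_add: "cg x y \<Longrightarrow> cg u v \<Longrightarrow> cg (x + u) (y + v)"
  apply (erule cgE, erule cgE)
  subgoal for e e' by (rule cgI[of "e + e'"]) (auto simp: algebra_simps)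
  done

lemma cg_mult: "cg x y \<Longrightarrow> cg u v \<Longrightarrow> pint x \<Longrightarrow> pint v \<Longrightarrow> cg (x * u) (y * v)"
  apply (erule cgE, erule cgE)
  subgoal for e e' apply (rule cgI[of "x * e' + v * e"]) apply (intro pint_add pint_mult; assumption) by (simp add: algebra_simps)
  done

lemma cg_prod: "(\<And>i. i \<in> A \<Longrightarrow> cg (f i) (g i) \<and> pint (f i) \<and> pint (g i)) \<Longrightarrow> cg (prod f A) (prod g A)"
proof (induct A rule: infinite_finite_induct)
  case (insert x F)
  then show ?case by (simp add: cg_mult pint_prod)
qed auto

lemma cg_int: "[a = b] (mod (int p)^2) \<Longrightarrow> cg (of_int a) (of_int b)"
proof -
  assume "[a = b] (mod (int p)^2)"
  then obtain k where "a = b + (int p)^2 * k"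
    by (metis cong_iff_lin cong_sym mult.commute)
  then show ?thesis by (intro cgI[of "of_int k"]) auto
qed

lemma cg_frac:
  assumes "[a = a'] (mod (int p)^2)" "[b = b'] (mod (int p)^2)" "\<not> int p dvd b" "\<not> int p dvd b'"
  shows "cg (of_int a / of_int b) (of_int a' / of_int b')"
proof -
  have "[a * b' = a' * b] (mod (int p)^2)"
    using assms(1,2) by (metis cong_mult cong_sym mult.commute)
  then obtain k where k: "a * b' - a' * b = (int p)^2 * k"
    by (metis cong_iff_lin cong_sym mult.commute diff_eq_eq add.commute)
  have nz: "b \<noteq> 0" "b' \<noteq> 0" using assms by auto
  have "of_int a / of_int b - of_int a' / of_int b' = (of_int (a * b' - a' * b) :: rat) / of_int (b*b')"
    using nz by (simp add: field_simps)
  also have "\<dots> = (of_nat p)^2 * (of_int k / of_int (b*b'))"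
    unfolding k by simp
  finally have "of_int a / of_int b = (of_int a' / of_int b' :: rat) + (of_nat p)^2 * (of_int k / of_int (b*b'))"
    by (simp add: algebra_simps)
  then show ?thesis using pint_frac[of "b*b'" k] pint_dvd_prod assms by (intro cgI) auto
qed

end

lemma prod_pair_odd:
  fixes F :: "nat \<Rightarrow> 'a::comm_monoid_mult"
  shows "(\<Prod>i<2*h+1. F i) = F h * (\<Prod>i<h. F i * F (2*h - i))"
proof (induct h arbitrary: F)
  case 0 then show ?case by simp
next
  case (Suc h)
  have e1: "2*Suc h+1 = Suc (Suc (2*h+1))" by simp
  have "(\<Prod>i<2*Suc h+1. F i) = (\<Prod>i<Suc (2*h+1). F i) * F (Suc (2*h+1))"
    by (simp only: e1 prod.lessThan_Suc)
  also have "(\<Prod>i<Suc (2*h+1). F i) = F 0 * (\<Prod>i<2*h+1. F (Suc i))"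
    by (rule prod.lessThan_Suc_shift)
  also have "(\<Prod>i<2*h+1. F (Suc i)) = F (Suc h) * (\<Prod>i<h. F (Suc i) * F (Suc (2*h - i)))"
    using Suc[of "\<lambda>i. F (Suc i)"] by simp
  also have "(\<Prod>i<h. F (Suc i) * F (Suc (2*h - i))) = (\<Prod>i<h. F (Suc i) * F (2*Suc h - Suc i))"
    by (intro prod.cong) (auto simp: Suc_diff_le)
  also have "(\<Prod>i<Suc h. F i * F (2*Suc h - i)) = (F 0 * F (2*Suc h - 0)) * (\<Prod>i<h. F (Suc i) * F (2*Suc h - Suc i))"
    by (rule prod.lessThan_Suc_shift)
  ultimately show ?case
    by (simp add: ac_simps)
qed

lemma prod_pair_even:
  fixes F :: "nat \<Rightarrow> 'a::comm_monoid_mult"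
  shows "(\<Prod>i<2*h. F i) = (\<Prod>i<h. F i * F (2*h - 1 - i))"
proof (induct h arbitrary: F)
  case 0 then show ?case by simp
next
  case (Suc h)
  have e1: "2*Suc h = Suc (Suc (2*h))" by simp
  have "(\<Prod>i<2*Suc h. F i) = (\<Prod>i<Suc (2*h). F i) * F (Suc (2*h))"
    by (simp only: e1 prod.lessThan_Suc)
  also have "(\<Prod>i<Suc (2*h). F i) = F 0 * (\<Prod>i<2*h. F (Suc i))"
    by (rule prod.lessThan_Suc_shift)
  also have "(\<Prod>i<2*h. F (Suc i)) = (\<Prod>i<h. F (Suc i) * F (Suc (2*h - 1 - i)))"
    using Suc[of "\<lambda>i. F (Suc i)"] by simp
  also have "(\<Prod>i<h. F (Suc i) * F (Suc (2*h - 1 - i))) = (\<Prod>i<h. F (Suc i) * F (2*Suc h - 1 - Suc i))"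
  proof -
    have aux: "\<And>x. x < h \<Longrightarrow> Suc (2*h - Suc x) = 2*h - x" by arith
    show ?thesis by (intro prod.cong) (auto simp: aux)
  qed
  also have "(\<Prod>i<Suc h. F i * F (2*Suc h - 1 - i)) = (F 0 * F (2*Suc h - 1 - 0)) * (\<Prod>i<h. F (Suc i) * F (2*Suc h - 1 - Suc i))"
    by (rule prod.lessThan_Suc_shift)
  ultimately show ?case
    by (simp add: ac_simps)
qed

lemma prod_split_add: "(\<Prod>k<m+n. F k) = (\<Prod>k<m. F k) * (\<Prod>i<n. F (m+i))" for m n :: nat
  by (induct n) (auto simp: ac_simps)

definition f :: "nat \<Rightarrow> rat" where "f k = of_int (2*int k+1) / of_int (2*int k+2)"

lemma alpha_prod: "alpha n = (\<Prod>k<n. f k)"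
proof (induct n)
  case 0 then show ?case by (simp add: alpha_def)
next
  case (Suc n)
  have "alpha (Suc n) = alpha n * ((1/2 + of_nat n) / (of_nat n + 1))"
    by (simp add: alpha_def pochhammer_Suc field_simps)
  also have "(1/2 + of_nat n) / (of_nat n + 1) = f n"
    by (simp add: f_def field_simps)
  finally show ?case using Suc by simp
qed

lemma alpha_binom: "alpha n = of_nat ((2*n) choose n) / 4^n"
proof -
  have "fact (2*n) = (2 ^ (2 * n) * pochhammer (1 / 2) n * fact n :: rat)"
    by (rule fact_double)
  moreover have "fact n * fact (2*n - n) * ((2*n) choose n) = fact (2*n)"
    by (rule binomial_fact_lemma) simp
  then have "(fact n * fact n * of_nat ((2*n) choose n) :: rat) = fact (2*n)"
    by (metis diff_mult_distrib mult_2 mult_1 diff_add_inverse2 add_diff_cancel_left' of_nat_fact of_nat_mult)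
  ultimately have "fact n * fact n * of_nat ((2*n) choose n) = (4 ^ n * pochhammer (1 / 2) n * fact n :: rat)"
    by (simp add: power_mult)
  then have "fact n * of_nat ((2*n) choose n) = (4 ^ n * pochhammer (1 / 2) n :: rat)"
    by (simp add: ac_simps)
  then show ?thesis unfolding alpha_def by (simp add: field_simps)
qed

definition K :: "nat \<Rightarrow> nat \<Rightarrow> int \<Rightarrow> int" where
  "K p m a = (2*int p*int m + a) * (2*int p*int m + 2*int p - a)"
definition NP :: "nat \<Rightarrow> nat \<Rightarrow> int" where
  "NP p m = (\<Prod>i<p div 2. K p m (2*int i+1))"
definition DP :: "nat \<Rightarrow> nat \<Rightarrow> int" where
  "DP p m = (\<Prod>i<p div 2. K p m (2*int i+2))"
definition g :: "nat \<Rightarrow> nat \<Rightarrow> rat" where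
  "g p m = of_int (NP p m) / of_int (DP p m)"

lemma K_pos: "0 < a \<Longrightarrow> a < 2 * int p \<Longrightarrow> K p m a > 0"
proof -
  assume a: "0 < a" "a < 2 * int p"
  have "0 \<le> 2*int p*int m" by simp
  then show ?thesis unfolding K_def using a by (intro mult_pos_pos) linarith+
qed

lemma DP_pos: "odd p \<Longrightarrow> DP p m > 0"
  unfolding DP_def by (intro prod_pos K_pos) auto

lemma NP_pos: "odd p \<Longrightarrow> NP p m > 0"
  unfolding NP_def by (intro prod_pos K_pos) auto

lemma aux_cancel: "(c::rat) \<noteq> 0 \<Longrightarrow> (c*a*n)/(d*(c*b)) = (a/b)*(n/d)"
  by (cases "b=0"; cases "d=0") (simp_all add: field_simps)

lemma block:
  assumes "odd p"
  shows "(\<Prod>i<p. f (p*m+i)) = f m * g p m"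
proof -
  define h where "h = p div 2"
  have p: "p = 2*h+1" using assms unfolding h_def by presburger
  define N where "N i = (of_int (2*int p*int m + 2*int i+1) :: rat)" for i
  define D where "D i = (of_int (2*int p*int m + 2*int i+2) :: rat)" for i
  have fN: "f (p*m+i) = N i / D i" for i
    unfolding f_def N_def D_def by (simp add: algebra_simps)
  have "(\<Prod>i<p. f (p*m+i)) = (\<Prod>i<p. N i) / (\<Prod>i<p. D i)"
    unfolding fN by (rule prod_dividef)
  also have "(\<Prod>i<p. N i) = N h * (\<Prod>i<h. N i * N (2*h - i))"
    unfolding p by (rule prod_pair_odd)
  also have "(\<Prod>i<h. N i * N (2*h - i)) = of_int (NP p m)"
    unfolding NP_def h_def[symmetric] of_int_prod
  proof (intro prod.cong refl)
    fix i assume "i \<in> {..<h}"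
    then have "int (2*h - i) = 2 * int h - int i" by simp
    then show "N i * N (2*h - i) = of_int (K p m (2*int i+1))"
      unfolding N_def K_def p by (simp add: algebra_simps)
  qed
  also have "(\<Prod>i<p. D i) = (\<Prod>i<2*h. D i) * D (2*h)"
    unfolding p by simp
  also have "(\<Prod>i<2*h. D i) = (\<Prod>i<h. D i * D (2*h - 1 - i))"
    by (rule prod_pair_even)
  also have "(\<Prod>i<h. D i * D (2*h - 1 - i)) = of_int (DP p m)"
    unfolding DP_def h_def[symmetric] of_int_prod
  proof (intro prod.cong refl)
    fix i assume "i \<in> {..<h}"
    then have "int (2*h - 1 - i) = 2 * int h - 1 - int i" by simp
    then show "D i * D (2*h - 1 - i) = of_int (K p m (2*int i+2))"
      unfolding D_def K_def p by (simp add: algebra_simps)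
  qed
  also have "N h = of_nat p * of_int (2 * int m + 1)"
    unfolding N_def p by (simp add: algebra_simps)
  also have "D (2*h) = of_nat p * of_int (2 * int m + 2)"
    unfolding D_def p by (simp add: algebra_simps)
  finally have E: "(\<Prod>i<p. f (p*m+i)) = (of_nat p * of_int (2 * int m + 1) * of_int (NP p m)) /
      (of_int (DP p m) * (of_nat p * of_int (2 * int m + 2)))" .
  have p0: "(of_nat p :: rat) \<noteq> 0" using p by simp
  have d0: "(of_int (DP p m) :: rat) \<noteq> 0" using DP_pos[OF assms, of m] by simp
  have m0: "(of_int (2 * int m + 2) :: rat) \<noteq> 0" by simp
  have "(of_nat p * of_int (2 * int m + 1) * of_int (NP p m)) /
      (of_int (DP p m) * (of_nat p * of_int (2 * int m + 2))) =
      (of_int (2 * int m + 1) / of_int (2 * int m + 2)) * (of_int (NP p m) / (of_int (DP p m) :: rat))"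
    using p0 by (rule aux_cancel)
  then show ?thesis using E unfolding g_def f_def[of m] by simp
qed

lemma alpha_Suc: "alpha (Suc n) = alpha n * f n"
  unfolding alpha_prod by simp

lemma alpha_decomp: "alpha (p*r + t) = alpha r * (\<Prod>m<r. g p m) * (\<Prod>i<t. f (p*r+i))" if "odd p"
proof -
  have A: "(\<Prod>k<p*r. f k) = alpha r * (\<Prod>m<r. g p m)"
  proof (induct r)
    case 0 then show ?case by (simp add: alpha_def)
  next
    case (Suc r)
    have "(\<Prod>k<p*Suc r. f k) = (\<Prod>k<p*r+p. f k)" by (simp add: add.commute)
    also have "\<dots> = (\<Prod>k<p*r. f k) * (\<Prod>i<p. f (p*r+i))"
      by (rule prod_split_add)
    also have "(\<Prod>i<p. f (p*r+i)) = f r * g p r" using block[OF that] .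
    also have "(\<Prod>k<p*r. f k) = alpha r * (\<Prod>m<r. g p m)" by (rule Suc)
    finally show ?case by (simp only: alpha_Suc prod.lessThan_Suc ac_simps)
  qed
  have "alpha (p*r + t) = (\<Prod>k<p*r. f k) * (\<Prod>i<t. f (p*r+i))"
    unfolding alpha_prod by (rule prod_split_add)
  then show ?thesis unfolding A .
qed

context fixes p :: nat assumes pp: "prime p" and op: "odd p" begin

lemma p3: "p \<ge> 3"
proof -
  have "p \<ge> 2" using prime_ge_2_nat[OF pp] .
  moreover have "p \<noteq> 2" using op by auto
  ultimately show ?thesis by simp
qed

lemma pi: "prime (int p)" using pp by simp

lemma nd2: "0 < j \<Longrightarrow> j < int p \<Longrightarrow> \<not> int p dvd (int p * c + 2 * j)"
proof
  assume j: "0 < j" "j < int p" and d: "int p dvd (int p * c + 2 * j)"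
  then have "int p dvd 2 * j" by (simp add: dvd_add_right_iff)
  then have "int p dvd 2 \<or> int p dvd j" using pi prime_dvd_mult_iff by blast
  then show False
  proof
    assume "int p dvd 2" then have "int p \<le> 2" by (rule zdvd_imp_le) simp
    then show False using p3 by simp
  next
    assume "int p dvd j" then have "int p \<le> j" using j by (intro zdvd_imp_le) auto
    then show False using j by simp
  qed
qed

lemma nd2m: "0 < j \<Longrightarrow> j < int p \<Longrightarrow> \<not> int p dvd (int p * c - 2 * j)"
proof
  assume j: "0 < j" "j < int p" and d: "int p dvd (int p * c - 2 * j)"
  then have "int p dvd (int p * (-c) + 2 * j)"
  proof -
    have "int p * (-c) + 2 * j = - (int p * c - 2 * j)" by simp
    then show ?thesis using d by (simp only: dvd_minus_iff)
  qed
  then show False using nd2[OF j] by blast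
qed

lemma nd_pow4: "\<not> int p dvd 4 ^ n"
proof
  assume "int p dvd 4 ^ n"
  then have "int p dvd 4" using pi prime_dvd_power by blast
  then have "int p dvd 2 * 2" by simp
  then have "int p dvd 2" using pi prime_dvd_mult_iff by blast
  then have "int p \<le> 2" by (rule zdvd_imp_le) simp
  then show False using p3 by simp
qed

lemma DP_nd: "\<not> int p dvd DP p m"
proof
  assume "int p dvd DP p m"
  then have "\<exists>i\<in>{..<p div 2}. int p dvd K p m (2*int i+2)"
    unfolding DP_def by (subst (asm) prime_dvd_prod_iff[OF _ pi]) simp_all
  then obtain i where i: "i < p div 2" "int p dvd K p m (2*int i+2)" by blast
  have e: "K p m (2*int i+2) = (int p * (2*int m) + 2*(int i+1)) * (int p * (2*int m+2) - 2*(int i+1))"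
    unfolding K_def by (simp add: algebra_simps)
  have j: "0 < int i + 1" "int i + 1 < int p" using i(1) by auto
  have "int p dvd (int p * (2*int m) + 2*(int i+1)) \<or> int p dvd (int p * (2*int m+2) - 2*(int i+1))"
    using i(2) unfolding e by (simp only: prime_dvd_mult_iff[OF pi])
  then show False using nd2[OF j] nd2m[OF j] by blast
qed

lemma pint_g: "p_integral p (g p m)"
  unfolding g_def using pint_frac[OF pp DP_nd] .

lemma K_cong: "[K p m a = K p 0 a] (mod (int p)^2)"
proof -
  have "K p m a - K p 0 a = (int p)^2 * (4*int m + 4*(int m)^2)"
    by (simp add: K_def algebra_simps power2_eq_square)
  then show ?thesis unfolding cong_iff_dvd_diff by simp
qed

lemma cg_g: "cg p (g p m) (g p 0)"
proof -
  have "[NP p m = NP p 0] (mod (int p)^2)" unfolding NP_def by (rule cong_prod) (rule K_cong)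
  moreover have "[DP p m = DP p 0] (mod (int p)^2)" unfolding DP_def by (rule cong_prod) (rule K_cong)
  ultimately show ?thesis unfolding g_def by (rule cg_frac[OF pp _ _ DP_nd DP_nd])
qed

lemma binom_cong: "\<exists>k. (2*p) choose p = 2 + p^2 * k"
proof -
  obtain n where n: "p = Suc n" using p3 by (cases p) auto
  have "(2*p) choose p = (\<Sum>k\<le>p. (p choose k)^2)" by (rule choose_square_sum[symmetric])
  also have "\<dots> = (p choose 0)^2 + (\<Sum>k\<le>n. (p choose Suc k)^2)"
    using sum.atMost_Suc_shift[of "\<lambda>k. (p choose k)^2" n] unfolding n[symmetric] .
  also have "(p choose 0)^2 = 1" by simp
  also have "(\<Sum>k\<le>n. (p choose Suc k)^2) = (\<Sum>k<n. (p choose Suc k)^2) + 1"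
    unfolding lessThan_Suc_atMost[symmetric] sum.lessThan_Suc using n by simp
  also have "p^2 dvd (\<Sum>k<n. (p choose Suc k)^2)"
  proof (rule dvd_sum)
    fix k assume "k \<in> {..<n}"
    then have "p dvd (p choose Suc k)" using pp n by (intro dvd_choose_prime) auto
    then show "p^2 dvd (p choose Suc k)^2" by (rule dvd_power_same)
  qed
  then obtain k where "(\<Sum>k<n. (p choose Suc k)^2) = p^2 * k" by blast
  ultimately have "(2*p) choose p = 2 + p^2 * k" by simp
  then show ?thesis by blast
qed

lemma fermat4: "\<exists>c. (4::nat)^(p-1) = 1 + p * c"
proof -
  have "\<not> int p dvd 4" using nd_pow4[of 1] by simp
  then have "\<not> p dvd 4" by (metis of_nat_dvd_iff of_nat_numeral)
  then have "[4^(p-1) = 1] (mod p)" by (rule fermat_theorem[OF pp])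
  moreover have "1 \<le> (4::nat)^(p-1)" by simp
  ultimately have "p dvd 4^(p-1) - 1" by (simp add: cong_altdef_nat)
  then obtain c where "4^(p-1) - 1 = p * c" by blast
  then show ?thesis using \<open>1 \<le> (4::nat)^(p-1)\<close> by (intro exI[of _ c]) linarith
qed

lemma g0_eq: "g p 0 = 2 * of_nat ((2*p) choose p) / 4^p"
proof -
  have "(\<Prod>i<p. f (p*0+i)) = f 0 * g p 0" using block[OF op] .
  moreover have "(\<Prod>i<p. f (p*0+i)) = alpha p" unfolding alpha_prod by simp
  ultimately have "alpha p = g p 0 / 2" by (simp add: f_def)
  then show ?thesis unfolding alpha_binom by (simp add: field_simps)
qed

lemma cg_g0: "cg p (g p 0) (2 - 4^(p-1))"
proof -
  obtain k where k: "(2*p) choose p = 2 + p^2 * k" using binom_cong by blast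
  obtain c where c: "(4::nat)^(p-1) = 1 + p * c" using fermat4 by blast
  define E where "E = (4::rat)^(p-1)"
  have E0: "E \<noteq> 0" unfolding E_def by simp
  have Ec: "E = 1 + of_nat p * of_nat c" unfolding E_def
    by (metis (mono_tags, lifting) c of_nat_1 of_nat_add of_nat_mult of_nat_numeral of_nat_power)
  have p4: "(4::rat)^p = 4 * E" unfolding E_def using p3
    by (metis Suc_diff_1 less_le_trans numeral_3_eq_3 power_Suc zero_less_Suc)
  have "g p 0 = (2 + of_nat p ^ 2 * of_nat k) / (2 * E)"
    unfolding g0_eq k p4 using E0 by (simp add: field_simps)
  also have "2 + of_nat p ^ 2 * of_nat k = 2*E*(2-E) + 2*(of_nat p)^2*(of_nat c)^2 + (of_nat p)^2 * (of_nat k :: rat)"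
    unfolding Ec by (simp add: algebra_simps power2_eq_square)
  also have "(2*E*(2-E) + 2*(of_nat p)^2*(of_nat c)^2 + (of_nat p)^2 * (of_nat k :: rat)) / (2 * E) =
     (2 - E) + (of_nat p)^2 * (of_nat c ^ 2 / E + of_nat k / (2 * E))"
    using E0 by (simp add: field_simps)
  finally have eq: "g p 0 = (2 - E) + (of_nat p)^2 * (of_nat c ^ 2 / E + of_nat k / (2 * E))" .
  have "p_integral p (of_nat c ^ 2 / E)"
    using pint_frac[OF pp nd_pow4[of "p-1"], of "int c ^ 2"] unfolding E_def by simp
  moreover have nd8: "\<not> int p dvd 2 * 4^(p-1)"
  proof
    assume "int p dvd 2 * 4^(p-1)"
    then have "int p dvd 2 \<or> int p dvd 4^(p-1)" using prime_dvd_mult_iff[OF pi] by blast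
    moreover have "\<not> int p dvd 2"
    proof
      assume "int p dvd 2" then have "int p \<le> 2" by (rule zdvd_imp_le) simp
      then show False using p3 by simp
    qed
    ultimately show False using nd_pow4 by blast
  qed
  then have "p_integral p (of_nat k / (2 * E))"
    using pint_frac[OF pp nd8, of "int k"] unfolding E_def by simp
  ultimately show ?thesis unfolding E_def[symmetric] by (intro cgI[OF pp _ eq] pint_add[OF pp])
qed

end

lemma alt_sum: "(\<Sum>j = 1..2 * t. (-1) ^ (j - 1) / of_nat j :: rat) =
   (\<Sum>i<t. 1 / of_int (2*int i+1) - 1 / of_int (2*int i+2))"
proof (induct t)
  case 0 then show ?case by simp
next
  case (Suc t)
  have e: "2 * Suc t = Suc (Suc (2*t))" by simp
  have "(\<Sum>j = 1..2 * Suc t. (-1) ^ (j - 1) / of_nat j :: rat) =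
     (\<Sum>j = 1..2 * t. (-1) ^ (j - 1) / of_nat j) + (-1)^(2*t) / of_nat (Suc (2*t)) + (-1)^(Suc (2*t)) / of_nat (Suc (Suc (2*t)))"
    unfolding e by (simp add: sum.cl_ivl_Suc)
  also have "\<dots> = (\<Sum>j = 1..2 * t. (-1) ^ (j - 1) / of_nat j) + (1 / of_int (2*int t+1) - 1 / of_int (2*int t+2))"
    by (simp add: add.commute)
  finally show ?case using Suc by simp
qed

lemma poly_id: "(A*(1+Q*C*Y))*(W*(1+Q*C*Z)) = (A*W)*(1+Q*C*(Y+Z)) + Q^2*(A*W*C^2*Y*Z)" for A Q C Y W Z :: rat
  by (simp add: algebra_simps power2_eq_square)

lemma step_id:
  fixes A B C Q :: rat
  assumes "B \<noteq> 0" "A \<noteq> 0" "B + Q*C \<noteq> 0"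
  shows "(A + Q*C)/(B+Q*C) = A/B*(1 + Q*C*(1/A - 1/B)) + Q^2 * (C^2*(A-B)/(B^2*(B+Q*C)))"
proof -
  have "A/B*(1 + Q*C*(1/A - 1/B)) = (A*B + Q*C*B - Q*C*A)/B^2"
    using assms by (simp add: field_simps power2_eq_square)
  moreover have "Q^2 * (C^2*(A-B)/(B^2*(B+Q*C))) = (Q^2*C^2*(A-B))/(B^2*(B+Q*C))" by simp
  ultimately have "A/B*(1 + Q*C*(1/A - 1/B)) + Q^2 * (C^2*(A-B)/(B^2*(B+Q*C))) =
     ((A*B + Q*C*B - Q*C*A)*(B+Q*C) + Q^2*C^2*(A-B))/(B^2*(B+Q*C))"
    using assms by (simp add: add_divide_distrib divide_divide_eq_left)
  also have "(A*B + Q*C*B - Q*C*A)*(B+Q*C) + Q^2*C^2*(A-B) = (A + Q*C) * B^2"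
    by (simp add: algebra_simps power2_eq_square)
  also have "(A + Q*C) * B^2 / (B^2*(B+Q*C)) = (A + Q*C)/(B+Q*C)"
    using assms by simp
  finally show ?thesis by simp
qed

context fixes p :: nat assumes pp: "prime p" and op: "odd p" begin

lemmas pint_simps[simp] = pint_1[OF pp] pint_0[OF pp] pint_nat[OF pp] pint_int[OF pp] pint_numeral[OF pp]

lemma cg_pow: "cg p ((1 - of_nat p * x)^n) (1 - of_nat p * x * of_nat n)" if "p_integral p x"
proof (induct n)
  case 0 then show ?case using cg_refl[OF pp] by simp
next
  case (Suc n)
  have "cg p ((1 - of_nat p * x)^n * (1 - of_nat p * x)) ((1 - of_nat p * x * of_nat n) * (1 - of_nat p * x))"
    using Suc that by (intro cg_mult[OF pp] cg_refl[OF pp]) (auto intro!: pint_power[OF pp] pint_diff[OF pp] pint_mult[OF pp])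
  moreover have "(1 - of_nat p * x * of_nat n) * (1 - of_nat p * x) =
      (1 - of_nat p * x * of_nat (Suc n)) + (of_nat p)^2 * (x * x * of_nat n)"
    by (simp add: algebra_simps power2_eq_square)
  moreover have "cg p ((1 - of_nat p * x * of_nat (Suc n)) + (of_nat p)^2 * (x * x * of_nat n)) (1 - of_nat p * x * of_nat (Suc n))"
    by (rule cgI[OF pp, of "x * x * of_nat n"]) (use that in \<open>auto intro!: pint_mult[OF pp]\<close>)
  ultimately show ?case by (metis cg_trans[OF pp] power_Suc2)
qed

lemma cg_G: "4^(p-1) = 1 + of_nat p * x \<Longrightarrow> p_integral p x \<Longrightarrow> cg p (\<Prod>m<r. g p m) (1 - of_nat p * x * of_nat r)"
proof -
  assume E: "4^(p-1) = 1 + of_nat p * x" and x: "p_integral p x"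
  have "cg p (\<Prod>m<r. g p m) (\<Prod>m<r. 1 - of_nat p * x)"
  proof (rule cg_prod[OF pp])
    fix m assume "m \<in> {..<r}"
    have "cg p (g p m) (1 - of_nat p * x)"
      using cg_trans[OF pp cg_g[OF pp op] cg_g0[OF pp op]] E by (simp add: algebra_simps)
    then show "cg p (g p m) (1 - of_nat p * x) \<and> p_integral p (g p m) \<and> p_integral p (1 - of_nat p * x)"
      using x pint_g[OF pp op] by (auto intro!: pint_diff[OF pp] pint_mult[OF pp])
  qed
  then show ?thesis using cg_trans[OF pp _ cg_pow[OF x]] by simp
qed

lemma nd_plus: "\<not> int p dvd a \<Longrightarrow> \<not> int p dvd (a + int p * c)"
  by (simp add: dvd_add_left_iff)

lemma pint_inv: "\<not> int p dvd a \<Longrightarrow> p_integral p (1 / of_int a)"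
  using pint_frac[OF pp, of a 1] by simp

lemma cg_step:
  assumes a: "\<not> int p dvd a" and b: "\<not> int p dvd b"
  shows "cg p (of_int (a + int p * c) / of_int (b + int p * c))
     (of_int a / of_int b * (1 + of_nat p * of_int c * (1 / of_int a - 1 / of_int b)))"
proof -
  have b0: "(of_int b :: rat) \<noteq> 0" using b by auto
  have a0: "(of_int a :: rat) \<noteq> 0" using a by auto
  have bc: "\<not> int p dvd (b + int p * c)" using nd_plus[OF b] .
  then have bc0: "(of_int b + of_nat p * of_int c :: rat) \<noteq> 0"
    by (metis dvd_0_right of_int_0_eq_iff of_int_add of_int_mult of_int_of_nat_eq)
  have "of_int (a + int p * c) / of_int (b + int p * c) =
     (of_int a / of_int b * (1 + of_nat p * of_int c * (1 / of_int a - 1 / of_int b))) +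
     (of_nat p)^2 * (of_int (c^2 * (a - b)) / of_int (b^2 * (b + int p * c)) :: rat)"
    using step_id[OF b0 a0 bc0] by simp
  moreover have "\<not> int p dvd (b^2 * (b + int p * c))"
    using pint_dvd_prod[OF pp pint_dvd_prod[OF pp b b] bc] by (simp add: power2_eq_square)
  ultimately show ?thesis by (intro cgI[OF pp _ _]) (rule pint_frac[OF pp])
qed

lemma tail:
  fixes t :: nat and a b :: "nat \<Rightarrow> int" and c :: int
  assumes "\<And>i. i < t \<Longrightarrow> \<not> int p dvd a i \<and> \<not> int p dvd b i"
  shows "cg p (\<Prod>i<t. of_int (a i + int p * c) / of_int (b i + int p * c))
     ((\<Prod>i<t. of_int (a i) / of_int (b i)) * (1 + of_nat p * of_int c * (\<Sum>i<t. 1 / of_int (a i) - 1 / of_int (b i))))"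
  using assms
proof (induct t)
  case 0 then show ?case using cg_refl[OF pp] by simp
next
  case (Suc t)
  define P where "P = (\<Prod>i<t. of_int (a i + int p * c) / (of_int (b i + int p * c) :: rat))"
  define A where "A = (\<Prod>i<t. of_int (a i) / (of_int (b i) :: rat))"
  define Y where "Y = (\<Sum>i<t. 1 / of_int (a i) - 1 / (of_int (b i) :: rat))"
  define Z where "Z = 1 / of_int (a t) - 1 / (of_int (b t) :: rat)"
  define x where "x = of_nat p * (of_int c :: rat)"
  have ab: "\<not> int p dvd a t" "\<not> int p dvd b t" using Suc by auto
  have pi_ab: "p_integral p (of_int (a i) / of_int (b i))" if "i < Suc t" for i
    using Suc that by (intro pint_frac[OF pp]) auto
  have pA: "p_integral p A" unfolding A_def using pi_ab by (intro pint_prod[OF pp]) auto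
  have pY: "p_integral p Y" unfolding Y_def using Suc
    by (intro pint_sum[OF pp] pint_diff[OF pp] pint_inv) auto
  have pZ: "p_integral p Z" unfolding Z_def using ab
    by (intro pint_diff[OF pp] pint_inv) auto
  have pP: "p_integral p P" unfolding P_def using Suc
    by (intro pint_prod[OF pp] pint_frac[OF pp] nd_plus) auto
  have IH: "cg p P (A * (1 + x * Y))" unfolding P_def A_def x_def Y_def
    by (rule Suc.hyps) (use Suc.prems in simp)
  have st: "cg p (of_int (a t + int p * c) / of_int (b t + int p * c)) (of_int (a t) / of_int (b t) * (1 + x * Z))"
    unfolding x_def Z_def by (rule cg_step[OF ab])
  have H1: "cg p (P * (of_int (a t + int p * c) / of_int (b t + int p * c)))
           ((A * (1 + x * Y)) * (of_int (a t) / of_int (b t) * (1 + x * Z)))"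
    by (rule cg_mult[OF pp IH st pP]) (unfold x_def; intro pint_mult[OF pp] pint_add[OF pp] pi_ab pZ; simp)
  moreover have H2: "(A * (1 + x * Y)) * (of_int (a t) / of_int (b t) * (1 + x * Z)) =
     (A * (of_int (a t) / of_int (b t))) * (1 + x * (Y + Z)) +
     (of_nat p)^2 * (A * (of_int (a t) / of_int (b t)) * (of_int c)^2 * Y * Z)"
    unfolding x_def by (rule poly_id)
  moreover have H3: "cg p ((A * (of_int (a t) / of_int (b t))) * (1 + x * (Y + Z)) +
     (of_nat p)^2 * (A * (of_int (a t) / of_int (b t)) * (of_int c)^2 * Y * Z))
     ((A * (of_int (a t) / of_int (b t))) * (1 + x * (Y + Z)))"
  proof (rule cgI[OF pp, of "A * (of_int (a t) / of_int (b t)) * (of_int c)^2 * Y * Z"])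
    have "p_integral p (of_int (a t) / of_int (b t))" using pi_ab[of t] by simp
    then show "p_integral p (A * (of_int (a t) / of_int (b t)) * (of_int c)^2 * Y * Z)"
      by (intro pint_mult[OF pp] pint_power[OF pp] pA pY pZ) auto
  qed simp
  have "cg p (P * (of_int (a t + int p * c) / of_int (b t + int p * c)))
     ((A * (of_int (a t) / of_int (b t))) * (1 + x * (Y + Z)))"
    using cg_trans[OF pp H1[unfolded H2] H3] .
  then show ?case unfolding P_def A_def Y_def Z_def x_def by simp
qed

end

theorem lemma2p5:
  fixes p r r' t :: nat
  assumes "prime p" and "odd p"
    and "r = p * r' + t" and "t < p"
  defines "\<gamma> \<equiv> (4 ^ (p - 1) - 1) / (of_nat p :: rat)"
  shows "(2 * t > p \<longrightarrow> pdvd p (of_nat p) (alpha r))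
       \<and> (2 * t < p \<longrightarrow>
           pcong p (alpha r)
             (alpha r' * alpha t *
               (1 - \<gamma> * of_nat p * of_nat r'
                  + 2 * of_nat p * of_nat r' *
                    (\<Sum>j = 1..2 * t. (-1) ^ (j - 1) / of_nat j)))
             ((of_nat p)^2))"
proof -
  have pp: "prime p" and op: "odd p" using assms by auto
  note ps[simp] = pint_simps[OF pp op]
  obtain c where c: "(4::nat)^(p-1) = 1 + p*c" using fermat4[OF pp op] by blast
  have c4: "(4::rat)^(p-1) = 1 + of_nat p * of_nat c"
    by (metis (mono_tags, lifting) c of_nat_1 of_nat_add of_nat_mult of_nat_numeral of_nat_power)
  have p0: "(of_nat p :: rat) \<noteq> 0" using pp by (auto simp: prime_gt_0_nat)
  have gam: "\<gamma> = of_nat c" unfolding \<gamma>_def c4 using p0 by simp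
  have pa: "p_integral p (alpha n)" for n
  proof -
    have "alpha n = of_int (int ((2*n) choose n)) / of_int (4^n)" unfolding alpha_binom by simp
    then show ?thesis using pint_frac[OF pp nd_pow4[OF pp op], of "int ((2*n) choose n)" n] by simp
  qed
  have pft: "p_integral p (f (p*r'+i))" if "i < t" for i
  proof -
    have E: "f (p*r'+i) = of_int (2*int (p*r'+i)+1) / of_int (int p * (2*int r') + 2*(int i+1))"
      unfolding f_def by (simp add: algebra_simps)
    have N: "\<not> int p dvd (int p * (2*int r') + 2*(int i+1))"
      using that assms(4) by (intro nd2[OF pp op]) auto
    show ?thesis unfolding E by (rule pint_frac[OF pp N])
  qed
  define G where "G = (\<Prod>m<r'. g p m)"
  define T where "T = (\<Prod>i<t. f (p*r'+i))"
  have dec: "alpha r = alpha r' * G * T" unfolding G_def T_def assms(3) by (rule alpha_decomp[OF op])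
  have pG: "p_integral p G" unfolding G_def by (intro pint_prod[OF pp] pint_g[OF pp op])
  have part1: "pdvd p (of_nat p) (alpha r)" if t2: "2 * t > p"
  proof -
    define h where "h = p div 2"
    have ph: "p = 2*h+1" using op unfolding h_def by presburger
    have ht: "h \<in> {..<t}" using t2 ph by auto
    define R where "R = (\<Prod>i\<in>{..<t}-{h}. f (p*r'+i))"
    have TR: "T = f (p*r'+h) * R" unfolding T_def R_def using prod.remove[OF _ ht] by simp
    have fh: "f (p*r'+h) = of_nat p * (of_int (2*int r'+1) / of_int (int p*(2*int r'+1)+1))"
      unfolding f_def ph by (simp add: algebra_simps)
    have nd1: "\<not> int p dvd (int p*(2*int r'+1)+1)"
    proof
      assume "int p dvd (int p*(2*int r'+1)+1)"
      then have "int p dvd 1" by (simp add: dvd_add_right_iff)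
      then show False using pp by simp
    qed
    have pR: "p_integral p R" unfolding R_def using pft by (intro pint_prod[OF pp]) auto
    have "alpha r = of_nat p * (alpha r' * G * (of_int (2*int r'+1) / of_int (int p*(2*int r'+1)+1)) * R)"
      unfolding dec TR fh by (simp add: ac_simps)
    moreover have "p_integral p (alpha r' * G * (of_int (2*int r'+1) / of_int (int p*(2*int r'+1)+1)) * R)"
      by (intro pint_mult[OF pp] pa pG pR pint_frac[OF pp nd1])
    ultimately show ?thesis unfolding pdvd_def by blast
  qed
  have part2: "pcong p (alpha r)
             (alpha r' * alpha t *
               (1 - \<gamma> * of_nat p * of_nat r'
                  + 2 * of_nat p * of_nat r' *
                    (\<Sum>j = 1..2 * t. (-1) ^ (j - 1) / of_nat j)))
             ((of_nat p)^2)" if t2: "2 * t < p"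
  proof -
    define S where "S = (\<Sum>j = 1..2 * t. (-1) ^ (j - 1) / of_nat j :: rat)"
    define a where "a i = 2 * int i + 1" for i
    define b where "b i = 2 * int i + 2" for i
    define x where "x = (of_nat c :: rat)"
    have ab: "\<not> int p dvd a i \<and> \<not> int p dvd b i" if "i < t" for i
    proof -
      have "0 < a i" "a i < int p" "0 < b i" "b i < int p" using that t2 unfolding a_def b_def by auto
      then show ?thesis using zdvd_imp_le by (meson not_le)
    qed
    have S_eq: "S = (\<Sum>i<t. 1 / of_int (a i) - 1 / of_int (b i))"
      unfolding S_def a_def b_def by (rule alt_sum)
    have pS: "p_integral p S" unfolding S_eq using ab
      by (intro pint_sum[OF pp] pint_diff[OF pp] pint_inv[OF pp op]) auto
    have T_eq: "T = (\<Prod>i<t. of_int (a i + int p * (2*int r')) / of_int (b i + int p * (2*int r')))"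
      unfolding T_def f_def a_def b_def by (intro prod.cong refl) (simp add: algebra_simps)
    have At: "(\<Prod>i<t. of_int (a i) / of_int (b i)) = alpha t"
      unfolding alpha_prod f_def a_def b_def by simp
    have H2: "cg p T (alpha t * (1 + of_nat p * of_int (2*int r') * S))"
      unfolding T_eq S_eq At[symmetric] by (rule tail[OF pp op ab])
    have H1: "cg p G (1 - of_nat p * x * of_nat r')"
      unfolding G_def x_def by (rule cg_G[OF pp op c4]) simp
    have pX2: "p_integral p (alpha t * (1 + of_nat p * of_int (2*int r') * S))"
      by (auto intro!: pint_mult[OF pp] pint_add[OF pp] pa pS)
    have H3: "cg p (G * T) ((1 - of_nat p * x * of_nat r') * (alpha t * (1 + of_nat p * of_int (2*int r') * S)))"
      by (rule cg_mult[OF pp H1 H2 pG pX2])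
    define X0 where "X0 = 1 - x * of_nat p * of_nat r' + 2 * of_nat p * of_nat r' * S"
    have H4: "(1 - of_nat p * x * of_nat r') * (alpha t * (1 + of_nat p * of_int (2*int r') * S)) =
       alpha t * X0 + (of_nat p)^2 * (- (alpha t * x * of_nat r' * 2 * of_nat r' * S))"
      unfolding X0_def by (simp add: algebra_simps power2_eq_square)
    have H5: "cg p (alpha t * X0 + (of_nat p)^2 * (- (alpha t * x * of_nat r' * 2 * of_nat r' * S))) (alpha t * X0)"
      by (rule cgI[OF pp _ refl]) (auto simp: x_def intro!: pint_uminus[OF pp] pint_mult[OF pp] pa pS)
    have H6: "cg p (G * T) (alpha t * X0)"
      using cg_trans[OF pp H3[unfolded H4] H5] .
    have pX0: "p_integral p X0" unfolding X0_def
      by (auto simp: x_def intro!: pint_add[OF pp] pint_diff[OF pp] pint_mult[OF pp] pS)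
    have H7: "cg p (alpha r' * (G * T)) (alpha r' * (alpha t * X0))"
      by (rule cg_mult[OF pp cg_refl[OF pp] H6 pa]) (intro pint_mult[OF pp] pa pX0)
    have L: "alpha r = alpha r' * (G * T)" unfolding dec by (simp add: ac_simps)
    have Rr: "alpha r' * alpha t * (1 - \<gamma> * of_nat p * of_nat r' + 2 * of_nat p * of_nat r' * S) = alpha r' * (alpha t * X0)"
      unfolding X0_def gam x_def by (simp add: ac_simps)
    have pRHS: "p_integral p (alpha r' * (alpha t * X0))"
      by (intro pint_mult[OF pp] pa pX0)
    show ?thesis
      unfolding S_def[symmetric] Rr pcong_def
      using H7 pRHS pa[of r] unfolding L cg_def[OF pp] by simp
  qed
  show ?thesis using part1 part2 by blast
qed

end
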